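(* Let $n_0,n_1$ be positive integers, let $(\eta,\omega)$ be a pair of nonnegative integer sequences $(\eta_\ell)_{\ell\ge1},(\omega_\ell)_{\ell\ge1}$ with finite support, and for $\ell\ge1$ let $(y_\ell,z_\ell)$ be the unique real solution of $y_\ell+z_\ell=\sum_{i\ge1}\frac{\eta_{\ell+i}+\omega_{\ell+i}}{(n_0+n_1)^i}$ and $y_\ell-z_\ell=\omega_\ell-\eta_\ell$ if $n_0=n_1$, $y_\ell-z_\ell=\sum_{i\ge1}\frac{\eta_{\ell+i}-\omega_{\ell+i}}{(n_0-n_1)^i}$ if $n_0\ne n_1$. Set $(y_0,z_0)=(1,0)$. Then the equations $\eta_1=n_0y_0+n_1z_0-y_1$ and $\omega_1=n_1y_0+n_0z_0-z_1$ hold if and only if $\sum_{\ell\ge1}\frac{\eta_\ell+\omega_\ell}{(n_0+n_1)^\ell}=1$ and (when $n_0\ne n_1$) $\sum_{\ell\ge1}\frac{\eta_\ell-\omega_\ell}{(n_0-n_1)^\ell}=1$. *)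

theory Defs
  imports Complex_Main
begin

end

theory Submission
  imports Defs
begin

lemma shift_lemma:
  fixes f :: "nat \<Rightarrow> real" and c :: real and M :: nat
  assumes c: "c \<noteq> 0" and M: "\<And>l. l \<ge> M \<Longrightarrow> f l = 0"
  shows "(\<Sum>l. f (l+1) / c^(l+1)) = f 1 / c + (\<Sum>i. f (1+(i+1)) / c^(i+1)) / c"
proof -
  have s1: "summable (\<lambda>l. f (l+1) / c^(l+1))"
    by (rule summable_finite[of "{..<M}"]) (auto simp: M)
  have s2: "summable (\<lambda>i. f (1+(i+1)) / c^(i+1))"
    by (rule summable_finite[of "{..<M}"]) (auto simp: M)
  have "(\<Sum>l. f (Suc l+1) / c^(Suc l+1)) = (\<Sum>l. f (l+1) / c^(l+1)) - f 1 / c"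
    using suminf_split_head[OF s1] by simp
  moreover have "(\<Sum>l. f (Suc l+1) / c^(Suc l+1)) = (\<Sum>i. f (1+(i+1)) / c^(i+1)) / c"
  proof -
    have "(\<lambda>l. f (Suc l+1) / c^(Suc l+1)) = (\<lambda>i. f (1+(i+1)) / c^(i+1) / c)"
      by (auto simp: field_simps)
    then show ?thesis using suminf_divide[OF s2, of c] by simp
  qed
  ultimately show ?thesis by linarith
qed

theorem corollary1:
  fixes n0 n1 :: nat and eta omega :: "nat \<Rightarrow> nat" and y z :: "nat \<Rightarrow> real"
  assumes "n0 > 0" and "n1 > 0"
    and "finite {l. eta l \<noteq> 0}" and "finite {l. omega l \<noteq> 0}"
    and sum_eq: "\<And>l. l \<ge> 1 \<Longrightarrow> y l + z l =
        (\<Sum>i. real (eta (l + (i+1)) + omega (l + (i+1))) / (real n0 + real n1) ^ (i+1))"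
    and diff_eq_same: "n0 = n1 \<Longrightarrow> (\<And>l. l \<ge> 1 \<Longrightarrow> y l - z l = real (omega l) - real (eta l))"
    and diff_eq_diff: "n0 \<noteq> n1 \<Longrightarrow> (\<And>l. l \<ge> 1 \<Longrightarrow> y l - z l =
        (\<Sum>i. (real (eta (l + (i+1))) - real (omega (l + (i+1)))) / (real n0 - real n1) ^ (i+1)))"
    and "y 0 = 1" and "z 0 = 0"
  shows "(real (eta 1) = real n0 * y 0 + real n1 * z 0 - y 1 \<and>
          real (omega 1) = real n1 * y 0 + real n0 * z 0 - z 1)
     \<longleftrightarrow>
         ((\<Sum>l. real (eta (l+1) + omega (l+1)) / (real n0 + real n1) ^ (l+1)) = 1 \<and>
          (n0 \<noteq> n1 \<longrightarrow>
            (\<Sum>l. (real (eta (l+1)) - real (omega (l+1))) / (real n0 - real n1) ^ (l+1)) = 1))"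
proof -
  define F where "F = {l. eta l \<noteq> 0} \<union> {l. omega l \<noteq> 0}"
  have fF: "finite F" using assms(3,4) by (simp add: F_def)
  define M where "M = Suc (Max (insert 0 F))"
  have M: "eta l = 0 \<and> omega l = 0" if "l \<ge> M" for l
  proof (rule ccontr)
    assume "\<not> ?thesis"
    then have "l \<in> insert 0 F" by (auto simp: F_def)
    then have "l \<le> Max (insert 0 F)" using fF by simp
    then show False using that by (simp add: M_def)
  qed
  define N where "N = real n0 + real n1"
  have N0: "N \<noteq> 0" using assms(1) by (simp add: N_def)
  have A: "(\<Sum>l. real (eta (l+1) + omega (l+1)) / N ^ (l+1))
      = real (eta 1 + omega 1) / N + (y 1 + z 1) / N"
    using shift_lemma[of N M "\<lambda>l. real (eta l + omega l)", OF N0] M sum_eq[of 1]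
    by (simp add: N_def)
  have E1: "(\<Sum>l. real (eta (l+1) + omega (l+1)) / N ^ (l+1)) = 1
      \<longleftrightarrow> real (eta 1) + real (omega 1) + y 1 + z 1 = N"
    unfolding A add_divide_distrib[symmetric] divide_eq_1_iff using N0 by auto
  show ?thesis
  proof (cases "n0 = n1")
    case True
    have "y 1 - z 1 = real (omega 1) - real (eta 1)" using diff_eq_same[OF True, of 1] by simp
    moreover have "real n0 = real n1" using True by simp
    ultimately show ?thesis using E1[unfolded N_def] assms(8,9) True by (simp only:) (simp only: mult_1_right mult_zero_right add_0_right simp_thms, intro iffI conjI impI; (elim conjE)?; linarith)
  next
    case False
    define D where "D = real n0 - real n1"
    have D0: "D \<noteq> 0" using False by (simp add: D_def)
    have B: "(\<Sum>l. (real (eta (l+1)) - real (omega (l+1))) / D ^ (l+1))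
      = (real (eta 1) - real (omega 1)) / D + (y 1 - z 1) / D"
      using shift_lemma[of D M "\<lambda>l. real (eta l) - real (omega l)", OF D0] M diff_eq_diff[OF False, of 1]
      by (simp add: D_def)
    have E2: "(\<Sum>l. (real (eta (l+1)) - real (omega (l+1))) / D ^ (l+1)) = 1
      \<longleftrightarrow> real (eta 1) - real (omega 1) + y 1 - z 1 = D"
      unfolding B add_divide_distrib[symmetric] divide_eq_1_iff using D0 by auto
    show ?thesis using E1[unfolded N_def] E2[unfolded D_def] False assms(8,9) by (simp only:) (simp only: mult_1_right mult_zero_right add_0_right simp_thms, intro iffI conjI impI; (elim conjE)?; linarith)
  qed
qed

end
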